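(* Let $d\ge 3$ and let $j$ be an integer with $0\le j\le d-1$. (a) If $d$ is odd and $d-j$ is even, then $\operatorname{triv}(d,j)=\operatorname{sign}(d,j)=\left\lfloor \frac{3d-2j-3}{6}\right\rfloor-\frac{d-j-2}{2}$. (b) If $d$ is odd and $d-j$ is odd, then $\operatorname{triv}(d,j)=\left\lfloor \frac{3d-2j-3}{6}\right\rfloor-\frac{d-j-3}{2}$ and $\operatorname{sign}(d,j)=\left\lfloor \frac{3d-2j-3}{6}\right\rfloor-\frac{d-j-1}{2}$. (c) If $d$ is even and $d-j$ is even, then $\operatorname{triv}(d,j)=\left\lfloor \frac{3d-2j}{6}\right\rfloor-\frac{d-j-2}{2}$ and $\operatorname{sign}(d,j)=\left\lfloor \frac{3d-2j}{6}\right\rfloor-\frac{d-j}{2}$. (d) If $d$ is even and $d-j$ is odd, then $\operatorname{triv}(d,j)=\operatorname{sign}(d,j)=\left\lfloor \frac{3d-2j}{6}\right\rfloor-\frac{d-j-1}{2}$.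
   Context: $\Bbbk$ is an algebraically closed field of characteristic $0$. For an integer $d\ge 1$, $A(d)=\Bbbk[x_1,x_2,x_3]/(x_1^d,x_2^d,x_3^d)=\bigoplus_j A(d)_j$ with its standard grading. $S_3$ acts on $A(d)$ by permuting variables. The linear map $E:A(d)_{j+1}\to A(d)_j$ is defined on the monomial basis by $E(x_1^{a_1}x_2^{a_2}x_3^{a_3})=\sum_{k=1}^{3} a_k(d-a_k)\,x_1^{a_1}\cdots x_k^{a_k-1}\cdots x_3^{a_3}$; it commutes with the $S_3$-action. $\operatorname{triv}(d,j)$ and $\operatorname{sign}(d,j)$ denote the multiplicities of the trivial and sign representations of $S_3$ in $\operatorname{Ker}(E)\cap A(d)_j$. *)

theory Defs
  imports Main "HOL-Library.Function_Algebras" "HOL-Combinatorics.Permutations" "HOL-Computational_Algebra.Polynomial"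
begin

text \<open>Exponent triples (a1,a2,a3) index the monomials x1^a1 x2^a2 x3^a3.
  An element of A(d)_j is represented by its coefficient function, which
  vanishes outside the monomial basis of A(d)_j.\<close>

type_synonym expo = "nat \<times> nat \<times> nat"

definition mbasis :: "nat \<Rightarrow> nat \<Rightarrow> expo set" where
  "mbasis d j = {(a1, a2, a3). a1 < d \<and> a2 < d \<and> a3 < d \<and> a1 + a2 + a3 = j}"

definition Agr :: "nat \<Rightarrow> nat \<Rightarrow> (expo \<Rightarrow> 'a::field) set" where
  "Agr d j = {f. \<forall>m. m \<notin> mbasis d j \<longrightarrow> f m = 0}"

definition cscale :: "'a::field \<Rightarrow> (expo \<Rightarrow> 'a) \<Rightarrow> (expo \<Rightarrow> 'a)" where
  "cscale c f = (\<lambda>m. c * f m)"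

definition vdim :: "(expo \<Rightarrow> 'a::field) set \<Rightarrow> nat" where
  "vdim V = vector_space.dim cscale V"

text \<open>The operator E: the coefficient of x^b in E(f) is
  sum_k (b_k+1)(d-b_k-1) * (coefficient of x^(b+e_k) in f),
  which is exactly the linear extension of
  E(x^a) = sum_k a_k (d-a_k) x^(a-e_k).\<close>
definition Eop :: "nat \<Rightarrow> (expo \<Rightarrow> 'a::field) \<Rightarrow> (expo \<Rightarrow> 'a)" where
  "Eop d f = (\<lambda>(b1, b2, b3).
      of_nat ((b1 + 1) * (d - (b1 + 1))) * f (b1 + 1, b2, b3)
    + of_nat ((b2 + 1) * (d - (b2 + 1))) * f (b1, b2 + 1, b3)
    + of_nat ((b3 + 1) * (d - (b3 + 1))) * f (b1, b2, b3 + 1))"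

definition KerE :: "nat \<Rightarrow> nat \<Rightarrow> (expo \<Rightarrow> 'a::field) set" where
  "KerE d j = {f \<in> Agr d j. Eop d f = (\<lambda>_. 0)}"

text \<open>S3 = permutations of {0,1,2} acting by permuting the variables.\<close>
definition comp3 :: "nat \<Rightarrow> expo \<Rightarrow> nat" where
  "comp3 i m = (case m of (a1, a2, a3) \<Rightarrow> if i = 0 then a1 else if i = 1 then a2 else a3)"

definition pmono :: "(nat \<Rightarrow> nat) \<Rightarrow> expo \<Rightarrow> expo" where
  "pmono \<sigma> m = (comp3 (\<sigma> 0) m, comp3 (\<sigma> 1) m, comp3 (\<sigma> 2) m)"

definition act :: "(nat \<Rightarrow> nat) \<Rightarrow> (expo \<Rightarrow> 'a::field) \<Rightarrow> (expo \<Rightarrow> 'a)" where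
  "act \<sigma> f = (\<lambda>m. f (pmono \<sigma> m))"

text \<open>Each representation is one-dimensional, so its multiplicity is the
  dimension of the corresponding isotypic component.\<close>
definition triv_part :: "nat \<Rightarrow> nat \<Rightarrow> (expo \<Rightarrow> 'a::field) set" where
  "triv_part d j = {f \<in> KerE d j. \<forall>\<sigma>. \<sigma> permutes {0, 1, 2} \<longrightarrow> act \<sigma> f = f}"

definition sign_part :: "nat \<Rightarrow> nat \<Rightarrow> (expo \<Rightarrow> 'a::field) set" where
  "sign_part d j = {f \<in> KerE d j. \<forall>\<sigma>. \<sigma> permutes {0, 1, 2} \<longrightarrow>
                      act \<sigma> f = cscale (of_int (sign \<sigma>)) f}"

definition triv :: "'a::field itself \<Rightarrow> nat \<Rightarrow> nat \<Rightarrow> nat" where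
  "triv _ d j = vdim (triv_part d j :: (expo \<Rightarrow> 'a) set)"

definition sgn_mult :: "'a::field itself \<Rightarrow> nat \<Rightarrow> nat \<Rightarrow> nat" where
  "sgn_mult _ d j = vdim (sign_part d j :: (expo \<Rightarrow> 'a) set)"

end

theory Submission
  imports Defs
begin


interpretation VS: vector_space "cscale :: 'a::field \<Rightarrow> (expo \<Rightarrow> 'a) \<Rightarrow> _"
  by unfold_locales (auto simp: cscale_def fun_eq_iff algebra_simps)

definition Lop :: "(expo \<Rightarrow> 'a::field) \<Rightarrow> (expo \<Rightarrow> 'a)" where
 "Lop f = (\<lambda>(b1,b2,b3). (if 0 < b1 then f (b1 - 1, b2, b3) else 0)
    + (if 0 < b2 then f (b1, b2-1, b3) else 0) + (if 0 < b3 then f (b1, b2, b3 - 1) else 0))"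

lemma Agr_zero: "f \<in> Agr d i \<Longrightarrow> \<not> (a < d \<and> b < d \<and> c < d \<and> a + b + c = i) \<Longrightarrow> f (a,b,c) = 0"
  by (auto simp: Agr_def mbasis_def)

lemma Agr_zero': "f \<in> Agr d i \<Longrightarrow> a + b + c \<noteq> i \<Longrightarrow> f (a,b,c) = 0"
  by (auto simp: Agr_def mbasis_def)

lemma AgrI: "(\<And>a b c. \<not> (a < d \<and> b < d \<and> c < d \<and> a + b + c = i) \<Longrightarrow> f (a,b,c) = 0) \<Longrightarrow> f \<in> Agr d i"
  by (auto simp: Agr_def mbasis_def)

lemma Eop_Agr: assumes "f \<in> Agr d i" "0 < i" shows "Eop d f \<in> Agr d (i - 1)"
proof (rule AgrI)
  fix a b c assume h: "\<not> (a < d \<and> b < d \<and> c < d \<and> a + b + c = i - 1)"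
  have "f (a+1,b,c) = 0" "f (a,b+1,c) = 0" "f (a,b,c+1) = 0"
    using h assms by (auto intro!: Agr_zero[OF assms(1)])
  then show "Eop d f (a,b,c) = 0" by (simp add: Eop_def)
qed

lemma Eop_Agr0: assumes "f \<in> Agr d 0" shows "Eop d f = 0"
proof -
  have "Eop d f (a,b,c) = 0" for a b c
    using Agr_zero'[OF assms, of "a+1" b c] Agr_zero'[OF assms, of a "b+1" c] Agr_zero'[OF assms, of a b "c+1"]
    by (simp add: Eop_def)
  then show ?thesis by (auto simp: fun_eq_iff)
qed

lemma Lop_Agr: assumes "f \<in> Agr d i" "i + 1 < d" shows "Lop f \<in> Agr d (i + 1)"
proof (rule AgrI)
  fix a b c assume h: "\<not> (a < d \<and> b < d \<and> c < d \<and> a + b + c = i + 1)"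
  then have "a + b + c \<noteq> i + 1" using assms by auto
  then have "(0 < a \<longrightarrow> f (a-1,b,c) = 0) \<and> (0 < b \<longrightarrow> f (a,b-1,c) = 0) \<and> (0 < c \<longrightarrow> f (a,b,c-1) = 0)"
    using Agr_zero'[OF assms(1)] by auto
  then show "Lop f (a,b,c) = 0" by (auto simp add: Lop_def)
qed

lemma Eop_add: "Eop d (f + g) = Eop d f + Eop d g"
  by (auto simp: Eop_def fun_eq_iff algebra_simps)
lemma Eop_scale: "Eop d (cscale c f) = cscale c (Eop d f)"
  by (auto simp: Eop_def cscale_def fun_eq_iff algebra_simps)
lemma Lop_add: "Lop (f + g) = Lop f + Lop g"
  by (auto simp: Lop_def fun_eq_iff algebra_simps)
lemma Lop_scale: "Lop (cscale c f) = cscale c (Lop f)"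
  by (auto simp: Lop_def cscale_def fun_eq_iff algebra_simps)
lemma Eop_zero: "Eop d 0 = 0" by (auto simp: Eop_def fun_eq_iff)
lemma Lop_zero: "Lop 0 = 0" by (auto simp: Lop_def fun_eq_iff)

lemma linear_Eop: "Vector_Spaces.linear cscale cscale (Eop d :: (expo \<Rightarrow> 'a::field) \<Rightarrow> _)"
  by (simp add: Vector_Spaces.linear_iff Eop_add Eop_scale VS.vector_space_axioms)
lemma linear_Lop: "Vector_Spaces.linear cscale cscale (Lop :: (expo \<Rightarrow> 'a::field) \<Rightarrow> _)"
  by (simp add: Vector_Spaces.linear_iff Lop_add Lop_scale VS.vector_space_axioms)

definition cf :: "nat \<Rightarrow> nat \<Rightarrow> 'a::field" where "cf d a = of_nat (a * (d - a))"

lemma cf_eq: "a \<le> d \<Longrightarrow> cf d a = (of_nat a * (of_nat d - of_nat a) :: 'a::field)"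
  by (simp add: cf_def of_nat_diff)

lemma Eop_eq: "Eop d f (b1,b2,b3) = cf d (b1+1) * f (b1+1,b2,b3) + cf d (b2+1) * f (b1,b2+1,b3)
   + cf d (b3+1) * f (b1,b2,b3+1)"
  by (simp add: Eop_def cf_def)

lemma comm_pt:
  fixes f :: "expo \<Rightarrow> 'a::field"
  assumes f: "f \<in> Agr d i" and id: "i + 1 < d"
  shows "Eop d (Lop f) (b1,b2,b3) = Lop (Eop d f) (b1,b2,b3) + of_nat (3*(d-1) - 2*i) * f (b1,b2,b3)"
proof (cases "b1 + b2 + b3 = i")
  case False
  then show ?thesis
    using Agr_zero'[OF f] by (cases b1; cases b2; cases b3) (simp_all add: Eop_def Lop_def)
next
  case True
  then have le: "b1 + 2 \<le> d" "b2 + 2 \<le> d" "b3 + 2 \<le> d" using id by auto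
  have h: "of_nat (3*(d-1) - 2*i) = (3 * of_nat d - 3 - 2 * (of_nat b1 + of_nat b2 + of_nat b3) :: 'a)"
    using id True[symmetric] by (simp add: of_nat_diff algebra_simps)
  show ?thesis
    unfolding h using le
    apply (cases b1; cases b2; cases b3)
    apply (simp_all add: Eop_eq Lop_def cf_eq)
    apply (simp_all add: algebra_simps)
    done
qed

lemma comm:
  fixes f :: "expo \<Rightarrow> 'a::field"
  assumes f: "f \<in> Agr d i" and id: "i + 1 < d"
  shows "Eop d (Lop f) = Lop (Eop d f) + cscale (of_nat (3*(d-1) - 2*i)) f"
  using comm_pt[OF assms] by (auto simp: fun_eq_iff cscale_def)

lemma EL_inj_aux:
  fixes f :: "expo \<Rightarrow> 'a::field_char_0"
  assumes "f \<in> Agr d i" "i + 1 < d" "Eop d (Lop f) = cscale (- of_nat n) f"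
  shows "f = 0"
  using assms
proof (induction i arbitrary: n f)
  case (0 n f)
  define h where "h = 3*(d-1) - 2*0"
  have hp: "0 < h" using 0 by (simp add: h_def)
  have "Eop d f = 0" using Eop_Agr0[OF 0(1)] .
  then have "Lop (Eop d f) = 0" by (simp add: Lop_zero)
  have "cscale (- of_nat n) f = Lop (Eop d f) + cscale (of_nat h) f"
    using comm[OF 0(1,2)] 0(3) unfolding h_def by metis
  then have "cscale (- of_nat n) f = cscale (of_nat h) f"
    using \<open>Lop (Eop d f) = 0\<close> by simp
  then have "\<And>m. (of_nat n + of_nat h :: 'a) * f m = 0"
  proof -
    fix m
    have "cscale (- of_nat n) f m = cscale (of_nat h) f m" using \<open>cscale (- of_nat n) f = cscale (of_nat h) f\<close>
      by simp
    then have "- (of_nat n * f m) = of_nat h * f m" by (simp add: cscale_def)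
    then have "of_nat h * f m = - (of_nat n * f m)" by simp
    then show "(of_nat n + of_nat h :: 'a) * f m = 0" by (simp add: distrib_right)
  qed
  moreover have "(of_nat n + of_nat h :: 'a) \<noteq> 0"
    using hp by (metis add_gr_0 of_nat_add of_nat_eq_0_iff not_gr0)
  ultimately show ?case by (auto simp: fun_eq_iff)
next
  case (Suc i n f)
  define h where "h = 3*(d-1) - 2*Suc i"
  have hp: "0 < h" using Suc by (simp add: h_def)
  have c: "Eop d (Lop f) = Lop (Eop d f) + cscale (of_nat h) f"
    using comm[OF Suc(2,3)] by (simp add: h_def)
  have L: "Lop (Eop d f) = cscale (- of_nat (n + h)) f"
  proof (rule ext)
    fix m
    have 1: "Eop d (Lop f) m = Lop (Eop d f) m + of_nat h * f m"
      using fun_cong[OF c, of m] by (simp add: cscale_def)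
    have 2: "Eop d (Lop f) m = - (of_nat n * f m)"
      using fun_cong[OF Suc(4), of m] by (simp add: cscale_def)
    have "Lop (Eop d f) m = - (of_nat n * f m) - of_nat h * f m"
      using 1 2 by (simp add: eq_diff_eq)
    then show "Lop (Eop d f) m = cscale (- of_nat (n + h)) f m"
      by (simp add: cscale_def left_diff_distrib)
  qed
  have g: "Eop d f \<in> Agr d i" using Eop_Agr[OF Suc(2)] by simp
  have EE: "Eop d (Lop (Eop d f)) = cscale (- of_nat (n + h)) (Eop d f)"
    unfolding L Eop_scale ..
  have "i + 1 < d" using Suc(3) by simp
  then have "Eop d f = 0"
    by (rule Suc.IH[OF g _ EE])
  then have "cscale (- of_nat (n + h)) f = (0 :: expo \<Rightarrow> 'a)" using L by (simp add: Lop_zero)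
  note zz = this
  have z: "\<And>m. cscale (- of_nat (n + h)) f m = (0::'a)"
    using fun_cong[OF zz] by (simp only: zero_fun_def)
  have nz: "(of_nat (n + h) :: 'a) \<noteq> 0"
    using hp by (simp only: of_nat_eq_0_iff)
  show ?case
  proof (rule ext)
    fix m show "f m = 0 m" using z[of m] nz by (auto simp add: cscale_def add_eq_0_iff)
  qed
qed

lemma EL_inj:
  fixes f :: "expo \<Rightarrow> 'a::field_char_0"
  assumes "f \<in> Agr d i" "i + 1 < d" "Eop d (Lop f) = 0"
  shows "f = 0"
  using EL_inj_aux[OF assms(1,2), of 0] assms(3) by (simp add: cscale_def fun_eq_iff zero_fun_def)



type_synonym 'a vec = "expo \<Rightarrow> 'a"

lemma disjoint_span:
  fixes A B :: "('a::field) vec set"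
  assumes ind: "VS.independent (A \<union> B)" and dj: "A \<inter> B = {}"
    and xa: "x \<in> VS.span A" and xb: "x \<in> VS.span B"
  shows "x = 0"
proof -
  let ?R = "VS.representation (A \<union> B) x"
  have RA: "?R = VS.representation A x"
    by (rule VS.representation_extend[OF ind xa]) auto
  have RB: "?R = VS.representation B x"
    by (rule VS.representation_extend[OF ind xb]) auto
  have z: "?R b = 0" for b
  proof (rule ccontr)
    assume "?R b \<noteq> 0"
    then have "b \<in> A" "b \<in> B" using RA RB VS.representation_ne_zero by metis+
    with dj show False by auto
  qed
  have "x \<in> VS.span (A \<union> B)" using xa VS.span_mono[of A "A \<union> B"] by auto
  from VS.sum_nonzero_representation_eq[OF ind this] z show ?thesis by simp
qed

lemma rank_nullity:
  fixes f :: "('a::field) vec \<Rightarrow> 'a vec"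
  assumes lin: "Vector_Spaces.linear cscale cscale f"
    and V: "VS.subspace V" "V \<subseteq> VS.span B0" "finite B0"
  shows "VS.dim V = VS.dim {x\<in>V. f x = 0} + VS.dim (f ` V)"
proof -
  interpret lf: Vector_Spaces.linear cscale cscale f by fact
  let ?K = "{x\<in>V. f x = 0}"
  obtain BK where BK: "BK \<subseteq> ?K" "VS.independent BK" "?K \<subseteq> VS.span BK"
    by (rule VS.maximal_independent_subset)
  obtain BV where BV: "BK \<subseteq> BV" "BV \<subseteq> V" "VS.independent BV" "V \<subseteq> VS.span BV"
    using VS.maximal_independent_subset_extend[of BK V] BK by auto
  have finBV: "finite BV" using VS.independent_span_bound[OF V(3) BV(3)] BV(2) V(2) by auto
  define C where "C = BV - BK"
  have spanBV: "VS.span BV = V" using VS.span_subspace[OF BV(2) BV(4) V(1)] .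
  have dimV: "VS.dim V = card BV" using VS.basis_card_eq_dim[OF BV(2,4,3)] by simp
  have dimK: "VS.dim ?K = card BK" using VS.basis_card_eq_dim[OF BK(1,3,2)] by simp
  have finBK: "finite BK" using finBV BV(1) finite_subset by auto
  have cardBV: "card BV = card BK + card C"
    unfolding C_def using card_Diff_subset[OF finBK BV(1)] card_mono[OF finBV BV(1)] by simp
  have BVu: "BV = BK \<union> C" "BK \<inter> C = {}" using BV(1) by (auto simp: C_def)
  have injC: "inj_on f (VS.span C)"
    unfolding lf.inj_on_iff_eq_0[OF VS.subspace_span]
  proof safe
    fix x assume x: "x \<in> VS.span C" "f x = 0"
    have "x \<in> V" using x(1) VS.span_mono[of C BV] spanBV by (auto simp: C_def)
    then have "x \<in> VS.span BK" using BK(3) x(2) by auto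
    then show "x = 0" using disjoint_span[of BK C x] BVu BV(3) x(1) by auto
  qed
  have indC: "VS.independent C" using VS.independent_mono[OF BV(3)] by (auto simp: C_def)
  have indfC: "VS.independent (f ` C)"
    using lf.independent_injective_image[OF indC injC] .
  have cardfC: "card (f ` C) = card C"
    using card_image inj_on_subset[OF injC VS.span_superset] by blast
  have sub: "f ` C \<subseteq> f ` V" using BV(2) by (auto simp: C_def)
  have spn: "f ` V \<subseteq> VS.span (f ` C)"
  proof
    fix y assume "y \<in> f ` V"
    then obtain v where v: "v \<in> V" "y = f v" by auto
    then have "y \<in> f ` VS.span (BK \<union> C)" using spanBV BVu by auto
    then have "y \<in> VS.span (f ` (BK \<union> C))" using lf.span_image by auto
    moreover have "VS.span (f ` (BK \<union> C)) \<subseteq> VS.span (f ` C)"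
    proof (rule VS.span_minimal)
      show "f ` (BK \<union> C) \<subseteq> VS.span (f ` C)"
      proof
        fix z assume "z \<in> f ` (BK \<union> C)"
        then obtain w where w: "w \<in> BK \<union> C" "z = f w" by auto
        show "z \<in> VS.span (f ` C)"
        proof (cases "w \<in> BK")
          case True then have "f w = 0" using BK(1) by auto
          then show ?thesis using w VS.span_zero by auto
        next
          case False then have "w \<in> C" using w by auto
          then show ?thesis using w VS.span_base[of "f w" "f ` C"] by auto
        qed
      qed
    qed auto
    ultimately show "y \<in> VS.span (f ` C)" by auto
  qed
  have dimfV: "VS.dim (f ` V) = card (f ` C)"
    using VS.basis_card_eq_dim[OF sub spn indfC] by simp
  show ?thesis using dimV dimK cardBV dimfV cardfC by simp
qed

lemma dim_mono_fin:
  fixes U V :: "('a::field) vec set"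
  assumes "U \<subseteq> V" "V \<subseteq> VS.span B0" "finite B0"
  shows "VS.dim U \<le> VS.dim V"
proof -
  obtain B where B: "B \<subseteq> V" "VS.independent B" "V \<subseteq> VS.span B" "card B = VS.dim V"
    by (rule VS.basis_exists)
  have "finite B" using VS.independent_span_bound[OF assms(3) B(2)] B(1) assms(2) by auto
  then show ?thesis using VS.dim_le_card[of U B] B assms(1) by auto
qed

lemma dim_inj_image:
  fixes f :: "('a::field) vec \<Rightarrow> 'a vec"
  assumes lin: "Vector_Spaces.linear cscale cscale f"
    and V: "VS.subspace V" "V \<subseteq> VS.span B0" "finite B0"
    and inj: "\<And>x. x \<in> V \<Longrightarrow> f x = 0 \<Longrightarrow> x = 0"
  shows "VS.dim (f ` V) = VS.dim V"
proof -
  have K: "{x\<in>V. f x = 0} \<subseteq> VS.span {}" using inj by auto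
  have "VS.dim {x\<in>V. f x = 0} = 0"
    using VS.basis_card_eq_dim[of "{}" "{x\<in>V. f x = 0}"] K VS.independent_empty by auto
  then show ?thesis using rank_nullity[OF assms(1-4)] by simp
qed



lemma ker_dim:
  fixes W :: "nat \<Rightarrow> ('a::field_char_0) vec set"
  assumes j: "0 < j" "j < d"
    and sub: "VS.subspace (W j)" "VS.subspace (W (j-1))"
    and fin: "W j \<subseteq> VS.span Bj" "finite Bj" "W (j-1) \<subseteq> VS.span Bi" "finite Bi"
    and agr: "W (j-1) \<subseteq> Agr d (j-1)"
    and E: "Eop d ` W j \<subseteq> W (j-1)"
    and L: "Lop ` W (j-1) \<subseteq> W j"
  shows "VS.dim {f\<in>W j. Eop d f = 0} = VS.dim (W j) - VS.dim (W (j-1))"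
proof -
  have rn: "VS.dim (W j) = VS.dim {f\<in>W j. Eop d f = 0} + VS.dim (Eop d ` W j)"
    using rank_nullity[OF linear_Eop sub(1) fin(1,2)] .
  have le: "VS.dim (Eop d ` W j) \<le> VS.dim (W (j-1))"
    using dim_mono_fin[OF E fin(3,4)] .
  have lin: "Vector_Spaces.linear cscale cscale (Eop d \<circ> Lop :: 'a vec \<Rightarrow> 'a vec)"
    using Vector_Spaces.linear_compose[OF linear_Lop linear_Eop] .
  have eq: "VS.dim ((Eop d \<circ> Lop) ` W (j-1)) = VS.dim (W (j-1))"
  proof (rule dim_inj_image[OF lin sub(2) fin(3,4)])
    fix x assume x: "x \<in> W (j-1)" "(Eop d \<circ> Lop) x = 0"
    show "x = 0" using EL_inj[of x d "j-1"] x agr j by auto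
  qed
  have ge: "VS.dim ((Eop d \<circ> Lop) ` W (j-1)) \<le> VS.dim (Eop d ` W j)"
  proof (rule dim_mono_fin[of _ _ Bi])
    show "(Eop d \<circ> Lop) ` W (j - 1) \<subseteq> Eop d ` W j" using L by auto
    show "Eop d ` W j \<subseteq> VS.span Bi" using E fin(3) by auto
  qed (rule fin(4))
  show ?thesis using rn le eq ge by simp
qed

definition Wsym :: "'a::field \<Rightarrow> nat \<Rightarrow> nat \<Rightarrow> 'a vec set" where
  "Wsym e d j = {f \<in> Agr d j. \<forall>a b c. f (b,a,c) = e * f (a,b,c) \<and> f (a,c,b) = e * f (a,b,c)}"

lemma Wsym_D1: "f \<in> Wsym e d j \<Longrightarrow> f (b,a,c) = e * f (a,b,c)"
  unfolding Wsym_def by blast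
lemma Wsym_D2: "f \<in> Wsym e d j \<Longrightarrow> f (a,c,b) = e * f (a,b,c)"
  unfolding Wsym_def by blast
lemma Wsym_Agr: "f \<in> Wsym e d j \<Longrightarrow> f \<in> Agr d j"
  unfolding Wsym_def by blast
lemma WsymI: "f \<in> Agr d j \<Longrightarrow> (\<And>a b c. f (b,a,c) = e * f (a,b,c)) \<Longrightarrow> (\<And>a b c. f (a,c,b) = e * f (a,b,c))
  \<Longrightarrow> f \<in> Wsym e d j"
  unfolding Wsym_def by blast

lemma Wsym_subspace: "VS.subspace (Wsym e d j)"
  unfolding VS.subspace_def
proof (intro conjI ballI allI)
  show "0 \<in> Wsym e d j" by (rule WsymI) (auto simp: Agr_def)
  fix x y assume x: "x \<in> Wsym e d j" and y: "y \<in> Wsym e d j"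
  show "x + y \<in> Wsym e d j"
  proof (rule WsymI)
    show "x + y \<in> Agr d j" using Wsym_Agr[OF x] Wsym_Agr[OF y] by (auto simp: Agr_def)
    fix a b c
    show "(x + y) (b, a, c) = e * (x + y) (a, b, c)"
      using Wsym_D1[OF x, of b a c] Wsym_D1[OF y, of b a c] by (simp add: distrib_left)
    show "(x + y) (a, c, b) = e * (x + y) (a, b, c)"
      using Wsym_D2[OF x, of a c b] Wsym_D2[OF y, of a c b] by (simp add: distrib_left)
  qed
next
  fix c x assume x: "x \<in> Wsym e d j"
  show "cscale c x \<in> Wsym e d j"
  proof (rule WsymI)
    show "cscale c x \<in> Agr d j" using Wsym_Agr[OF x] by (auto simp: Agr_def cscale_def)
    fix a b c'
    show "cscale c x (b, a, c') = e * cscale c x (a, b, c')"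
      using Wsym_D1[OF x, of b a c'] by (simp add: cscale_def mult.left_commute)
    show "cscale c x (a, c', b) = e * cscale c x (a, b, c')"
      using Wsym_D2[OF x, of a c' b] by (simp add: cscale_def mult.left_commute)
  qed
qed

lemma Eop_Wsym: assumes f: "f \<in> Wsym e d j" and j: "0 < j" shows "Eop d f \<in> Wsym e d (j-1)"
proof (rule WsymI)
  show "Eop d f \<in> Agr d (j - 1)" using Eop_Agr[OF Wsym_Agr[OF f] j] .
  fix a b c
  show "Eop d f (b, a, c) = e * Eop d f (a, b, c)"
    using Wsym_D1[OF f, of "b+1" a c] Wsym_D1[OF f, of b "a+1" c] Wsym_D1[OF f, of b a "c+1"]
    by (simp add: Eop_eq algebra_simps)
  show "Eop d f (a, c, b) = e * Eop d f (a, b, c)"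
    using Wsym_D2[OF f, of "a+1" c b] Wsym_D2[OF f, of a "c+1" b] Wsym_D2[OF f, of a c "b+1"]
    by (simp add: Eop_eq algebra_simps)
qed

lemma Lop_Wsym: assumes f: "f \<in> Wsym e d i" and j: "i + 1 < d" shows "Lop f \<in> Wsym e d (i+1)"
proof (rule WsymI)
  show "Lop f \<in> Agr d (i + 1)" using Lop_Agr[OF Wsym_Agr[OF f] j] .
  fix a b c
  show "Lop f (b, a, c) = e * Lop f (a, b, c)"
    using Wsym_D1[OF f, of "b-1" a c] Wsym_D1[OF f, of b "a-1" c] Wsym_D1[OF f, of b a "c-1"]
    by (cases "a = 0"; cases "b = 0"; cases "c = 0") (simp_all add: Lop_def algebra_simps)
  show "Lop f (a, c, b) = e * Lop f (a, b, c)"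
    using Wsym_D2[OF f, of "a-1" c b] Wsym_D2[OF f, of a "c-1" b] Wsym_D2[OF f, of a c "b-1"]
    by (cases "a = 0"; cases "b = 0"; cases "c = 0") (simp_all add: Lop_def algebra_simps)
qed

lemma comp3_pmono: "k \<in> {0,1,2} \<Longrightarrow> comp3 k (pmono t m) = comp3 (t k) m"
  by (auto simp: pmono_def comp3_def[of k])

lemma pmono_id: "pmono (\<lambda>x. x) m = m"
  by (cases m) (simp add: pmono_def comp3_def)
lemma pmono_id': "pmono id m = m"
  by (cases m) (simp add: pmono_def comp3_def)
lemma act_id: "act id f = f"
  by (rule ext) (simp only: act_def pmono_id')

lemma pmono_comp:
  assumes p: "p permutes {0,1,2::nat}"
  shows "pmono (t \<circ> p) m = pmono p (pmono t m)"
proof -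
  have "p i \<in> {0,1,2}" if "i \<in> {0,1,2::nat}" for i
    using permutes_in_image[OF p] that by auto
  then have "comp3 (p i) (pmono t m) = comp3 (t (p i)) m" if "i \<in> {0,1,2::nat}" for i
    using that by (simp add: comp3_pmono)
  then show ?thesis by (simp add: pmono_def[of "t \<circ> p"] pmono_def[of p "pmono t m"])
qed

lemma act_comp: "p permutes {0,1,2::nat} \<Longrightarrow> act (t \<circ> p) f = act t (act p f)"
  by (simp add: act_def pmono_comp)

lemma act_scale: "act t (cscale c f) = cscale c (act t f)"
  by (simp add: act_def cscale_def)

lemma act_transp:
  fixes f :: "'a::field vec"
  assumes f: "f \<in> Wsym e d j" and e: "e * e = 1"
    and ab: "a \<in> {0,1,2::nat}" "b \<in> {0,1,2}" "a \<noteq> b"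
  shows "act (Transposition.transpose a b) f = cscale e f"
proof (rule ext)
  fix m :: expo
  obtain x y z where m: "m = (x,y,z)" by (cases m) auto
  have s01: "f (y,x,z) = e * f (x,y,z)" using Wsym_D1[OF f] .
  have s12: "f (x,z,y) = e * f (x,y,z)" using Wsym_D2[OF f] .
  have s02: "f (z,y,x) = e * f (x,y,z)"
  proof -
    have "f (z,y,x) = e * f (y,z,x)" using Wsym_D1[OF f] .
    also have "f (y,z,x) = e * f (y,x,z)" using Wsym_D2[OF f] .
    also have "f (y,x,z) = e * f (x,y,z)" using Wsym_D1[OF f] .
    finally show ?thesis using e by (simp add: mult.assoc[symmetric])
  qed
  show "act (Transposition.transpose a b) f m = cscale e f m"
  proof -
    have ps: "pmono (Transposition.transpose 0 1) (x,y,z) = (y,x,z)"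
      "pmono (Transposition.transpose 1 0) (x,y,z) = (y,x,z)"
      "pmono (Transposition.transpose 1 2) (x,y,z) = (x,z,y)"
      "pmono (Transposition.transpose 2 1) (x,y,z) = (x,z,y)"
      "pmono (Transposition.transpose 0 2) (x,y,z) = (z,y,x)"
      "pmono (Transposition.transpose 2 0) (x,y,z) = (z,y,x)"
      by (simp_all add: pmono_def comp3_def transpose_def)
    have "(a,b) \<in> {(0,1),(1,0),(0,2),(2,0),(1,2),(2,1)}" using ab by auto
    then show ?thesis
      using s01 s12 s02 ps unfolding m act_def cscale_def by auto
  qed
qed

lemma triv_part_eq:
  "(triv_part d j :: ('a::field) vec set) = {f \<in> Wsym 1 d j. Eop d f = 0}"
proof safe
  fix f :: "'a vec" assume f: "f \<in> triv_part d j"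
  have p: "Transposition.transpose 0 1 permutes {0,1,2::nat}" "Transposition.transpose 1 2 permutes {0,1,2::nat}"
    by (auto intro!: permutes_swap_id)
  have a1: "act (Transposition.transpose 0 1) f = f" and a2: "act (Transposition.transpose 1 2) f = f"
  proof -
    have "\<forall>\<sigma>. \<sigma> permutes {0,1,2::nat} \<longrightarrow> act \<sigma> f = f" using f unfolding triv_part_def by blast
    then show "act (Transposition.transpose 0 1) f = f" "act (Transposition.transpose 1 2) f = f" using p by blast+
  qed
  show "f \<in> Wsym 1 d j"
  proof (rule WsymI)
    show "f \<in> Agr d j" using f unfolding triv_part_def KerE_def by blast
    fix a b c
    show "f (b,a,c) = 1 * f (a,b,c)" using fun_cong[OF a1, of "(a,b,c)"]
      by (simp add: act_def pmono_def comp3_def transpose_def)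
    show "f (a,c,b) = 1 * f (a,b,c)" using fun_cong[OF a2, of "(a,b,c)"]
      by (simp add: act_def pmono_def comp3_def transpose_def)
  qed
  show "Eop d f = 0" using f unfolding triv_part_def KerE_def zero_fun_def by blast
next
  fix f :: "'a vec" assume f: "f \<in> Wsym 1 d j" and E: "Eop d f = 0"
  show "f \<in> triv_part d j" unfolding triv_part_def KerE_def
  proof (intro CollectI conjI allI impI)
    show "f \<in> Agr d j" using Wsym_Agr[OF f] .
    show "Eop d f = (\<lambda>_. 0)" using E by (simp add: zero_fun_def)
    fix \<sigma> :: "nat \<Rightarrow> nat" assume s: "\<sigma> permutes {0,1,2}"
    show "act \<sigma> f = f"
      using s finite.insertI[OF finite.insertI[OF finite.insertI[OF finite.emptyI]]]
    proof (induction \<sigma> rule: permutes_induct)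
      case id show ?case by (rule act_id)
    next
      case (swap a b p)
      have pp: "p permutes {0,1,2}" and ih: "act p f = f" and ab: "a \<in> {0,1,2}" "b \<in> {0,1,2}" "a \<noteq> b"
        by (fact swap)+
      have "act (Transposition.transpose a b \<circ> p) f = act (Transposition.transpose a b) (act p f)"
        by (rule act_comp[OF pp])
      also have "\<dots> = act (Transposition.transpose a b) f" by (simp only: ih)
      also have "\<dots> = cscale 1 f" by (rule act_transp[OF f _ ab]) simp
      also have "\<dots> = f" by (simp add: cscale_def)
      finally show ?case .
    qed
  qed
qed

lemma sign_part_eq:
  "(sign_part d j :: ('a::field) vec set) = {f \<in> Wsym (-1) d j. Eop d f = 0}"
proof safe
  fix f :: "'a vec" assume f: "f \<in> sign_part d j"
  have p: "Transposition.transpose 0 1 permutes {0,1,2::nat}" "Transposition.transpose 1 2 permutes {0,1,2::nat}"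
    by (auto intro!: permutes_swap_id)
  have a1: "act (Transposition.transpose 0 1) f = cscale (-1) f" and a2: "act (Transposition.transpose 1 2) f = cscale (-1) f"
  proof -
    have "\<forall>\<sigma>. \<sigma> permutes {0,1,2::nat} \<longrightarrow> act \<sigma> f = cscale (of_int (sign \<sigma>)) f" using f unfolding sign_part_def by blast
    then have "act (Transposition.transpose 0 1) f = cscale (of_int (sign (Transposition.transpose (0::nat) 1))) f"
       "act (Transposition.transpose 1 2) f = cscale (of_int (sign (Transposition.transpose (1::nat) 2))) f"
      using p by blast+
    then show "act (Transposition.transpose 0 1) f = cscale (-1) f" "act (Transposition.transpose 1 2) f = cscale (-1) f"
      by (simp_all only: sign_swap_id) simp_all
  qed
  show "f \<in> Wsym (-1) d j"
  proof (rule WsymI)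
    show "f \<in> Agr d j" using f unfolding sign_part_def KerE_def by blast
    fix a b c
    show "f (b,a,c) = -1 * f (a,b,c)" using fun_cong[OF a1, of "(a,b,c)"]
      by (simp add: act_def pmono_def comp3_def transpose_def cscale_def)
    show "f (a,c,b) = -1 * f (a,b,c)" using fun_cong[OF a2, of "(a,b,c)"]
      by (simp add: act_def pmono_def comp3_def transpose_def cscale_def)
  qed
  show "Eop d f = 0" using f unfolding sign_part_def KerE_def zero_fun_def by blast
next
  fix f :: "'a vec" assume f: "f \<in> Wsym (-1) d j" and E: "Eop d f = 0"
  show "f \<in> sign_part d j" unfolding sign_part_def KerE_def
  proof (intro CollectI conjI allI impI)
    show "f \<in> Agr d j" using Wsym_Agr[OF f] .
    show "Eop d f = (\<lambda>_. 0)" using E by (simp add: zero_fun_def)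
    fix \<sigma> :: "nat \<Rightarrow> nat" assume s: "\<sigma> permutes {0,1,2}"
    show "act \<sigma> f = cscale (of_int (sign \<sigma>)) f"
      using s finite.insertI[OF finite.insertI[OF finite.insertI[OF finite.emptyI]]]
    proof (induction \<sigma> rule: permutes_induct)
      case id show ?case by (simp only: act_id sign_id) (simp add: cscale_def)
    next
      case (swap a b p)
      have pp0: "p permutes {0,1,2}" and ih: "act p f = cscale (of_int (sign p)) f"
        and ab: "a \<in> {0,1,2}" "b \<in> {0,1,2}" "a \<noteq> b"
        by (fact swap)+
      have pp: "permutation p" by (rule permutes_imp_permutation[OF _ pp0]) simp
      have sg: "sign (Transposition.transpose a b \<circ> p) = - sign p"
        using sign_compose[OF permutation_swap_id pp] ab(3) by (simp add: sign_swap_id)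
      have "act (Transposition.transpose a b \<circ> p) f = act (Transposition.transpose a b) (act p f)"
        by (rule act_comp[OF pp0])
      also have "\<dots> = cscale (of_int (sign p)) (act (Transposition.transpose a b) f)"
        by (simp only: ih act_scale)
      also have "\<dots> = cscale (of_int (sign p)) (cscale (-1) f)"
        by (subst act_transp[OF f _ ab]) simp_all
      also have "\<dots> = cscale (of_int (sign (Transposition.transpose a b \<circ> p))) f"
        by (simp add: cscale_def sg)
      finally show ?case .
    qed
  qed
qed



lemma sum_fun_apply: "(\<Sum>i\<in>S. g i) x = (\<Sum>i\<in>S. g i x)"
  by (induction S rule: infinite_finite_induct) auto

lemma indep_points:
  fixes g :: "expo \<Rightarrow> ('a::field) vec" and S :: "expo set"
  assumes fin: "finite S" and pt: "\<And>m m'. m \<in> S \<Longrightarrow> m' \<in> S \<Longrightarrow> g m m' = (if m = m' then 1 else 0)"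
  shows "VS.independent (g ` S)" "inj_on g S"
proof -
  show inj: "inj_on g S"
  proof (rule inj_onI)
    fix m m' assume "m \<in> S" "m' \<in> S" "g m = g m'"
    then have "g m m' = g m' m'" by simp
    then show "m = m'" using pt \<open>m \<in> S\<close> \<open>m' \<in> S\<close> by (auto split: if_splits)
  qed
  show "VS.independent (g ` S)"
    unfolding VS.independent_explicit_module
  proof (intro allI impI)
    fix t u v assume t: "finite t" "t \<subseteq> g ` S" and z: "(\<Sum>v\<in>t. cscale (u v) v) = 0" and v: "v \<in> t"
    obtain m where m: "m \<in> S" "v = g m" using t v by auto
    have "(\<Sum>w\<in>t. cscale (u w) w) m = 0" using z by simp
    then have "(\<Sum>w\<in>t. u w * w m) = 0" by (simp add: sum_fun_apply cscale_def)
    moreover have "(\<Sum>w\<in>t. u w * w m) = u v * v m + (\<Sum>w\<in>t - {v}. u w * w m)"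
      using sum.remove[OF t(1) v] .
    moreover have "(\<Sum>w\<in>t - {v}. u w * w m) = 0"
    proof (rule sum.neutral, rule ballI)
      fix w assume w: "w \<in> t - {v}"
      then obtain k where k: "k \<in> S" "w = g k" using t by auto
      then have "k \<noteq> m" using w m by auto
      then show "u w * w m = 0" using pt[OF k(1) m(1)] k by simp
    qed
    moreover have "v m = 1" using pt[OF m(1) m(1)] m by simp
    ultimately show "u v = 0" by simp
  qed
qed



definition sort3 :: "expo \<Rightarrow> expo" where
  "sort3 m = (case m of (a,b,c) \<Rightarrow> (min a (min b c), a + b + c - min a (min b c) - max a (max b c), max a (max b c)))"

definition sg :: "'a::field \<Rightarrow> expo \<Rightarrow> 'a" where
  "sg e m = (case m of (a,b,c) \<Rightarrow> (if a \<le> b then 1 else e) * (if b \<le> c then 1 else e) * (if a \<le> c then 1 else e))"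

definition Sorted :: "nat \<Rightarrow> expo set" where
  "Sorted j = {(a,b,c). a \<le> b \<and> b \<le> c \<and> a + b + c = j}"
definition Strict :: "nat \<Rightarrow> expo set" where
  "Strict j = {(a,b,c). a < b \<and> b < c \<and> a + b + c = j}"

lemma Sorted_fin: "finite (Sorted j)"
proof (rule finite_subset)
  show "Sorted j \<subseteq> {0..j} \<times> {0..j} \<times> {0..j}" by (auto simp: Sorted_def)
qed auto

lemma Strict_fin: "finite (Strict j)"
proof (rule finite_subset)
  show "Strict j \<subseteq> {0..j} \<times> {0..j} \<times> {0..j}" by (auto simp: Strict_def)
qed auto

lemma sort3_swap1: "sort3 (b,a,c) = sort3 (a,b,c)"
  by (auto simp: sort3_def min_def max_def)
lemma sort3_swap2: "sort3 (a,c,b) = sort3 (a,b,c)"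
  by (auto simp: sort3_def min_def max_def)
lemma sort3_id: "a \<le> b \<Longrightarrow> b \<le> c \<Longrightarrow> sort3 (a,b,c) = (a,b,c)"
  by (auto simp: sort3_def min_def max_def)
lemma sort3_props: "sort3 (a,b,c) = (p,q,r) \<Longrightarrow> p \<le> q \<and> q \<le> r \<and> p + q + r = a + b + c"
  by (auto simp: sort3_def min_def max_def)
lemma sort3_strict: "sort3 (a,b,c) = (p,q,r) \<Longrightarrow> p < q \<Longrightarrow> q < r \<Longrightarrow> a \<noteq> b \<and> b \<noteq> c \<and> a \<noteq> c"
  by (auto simp: sort3_def min_def max_def split: if_splits)

lemma Wsym_sort:
  fixes f :: "('a::field) vec"
  assumes f: "f \<in> Wsym e d j"
  shows "f (sort3 (a,b,c)) = sg e (a,b,c) * f (a,b,c)"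
proof -
  have D1: "\<And>a b c. f (b,a,c) = e * f (a,b,c)" using Wsym_D1[OF f] .
  have D2: "\<And>a b c. f (a,c,b) = e * f (a,b,c)" using Wsym_D2[OF f] .
  consider "a \<le> b" "b \<le> c" | "a \<le> b" "c < b" "a \<le> c" | "a \<le> b" "c < b" "c < a"
    | "b < a" "b \<le> c" "a \<le> c" | "b < a" "b \<le> c" "c < a" | "b < a" "c < b" by linarith
  then show ?thesis
  proof cases
    case 1 then show ?thesis by (simp add: sort3_id sg_def)
  next
    case 2
    then have "sort3 (a,b,c) = (a,c,b)" by (auto simp: sort3_def min_def max_def)
    then show ?thesis using 2 D2[where a=a and b=b and c=c] by (simp add: sg_def)
  next
    case 3
    then have "sort3 (a,b,c) = (c,a,b)" by (auto simp: sort3_def min_def max_def)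
    then show ?thesis using 3 D1[where a=a and b=c and c=b] D2[where a=a and b=b and c=c] by (simp add: sg_def)
  next
    case 4
    then have "sort3 (a,b,c) = (b,a,c)" by (auto simp: sort3_def min_def max_def)
    then show ?thesis using 4 D1[where a=a and b=b and c=c] by (simp add: sg_def)
  next
    case 5
    then have "sort3 (a,b,c) = (b,c,a)" by (auto simp: sort3_def min_def max_def)
    then show ?thesis using 5 D2[where a=b and b=a and c=c] D1[where a=a and b=b and c=c] by (simp add: sg_def)
  next
    case 6
    then have "sort3 (a,b,c) = (c,b,a)" by (auto simp: sort3_def min_def max_def)
    then show ?thesis using 6 D1[where a=b and b=c and c=a] D2[where a=b and b=a and c=c] D1[where a=a and b=b and c=c] by (simp add: sg_def)
  qed
qed



definition sv :: "expo \<Rightarrow> ('a::field) vec" where "sv m = (\<lambda>x. if sort3 x = m then 1 else 0)"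
definition av :: "expo \<Rightarrow> ('a::field) vec" where "av m = (\<lambda>x. if sort3 x = m then sg (-1) x else 0)"

lemma sort3_sum_agr:
  assumes "sort3 (a,b,c) = m" "m \<in> Sorted j \<or> m \<in> Strict j" "j < d"
  shows "a < d \<and> b < d \<and> c < d \<and> a + b + c = j"
proof -
  obtain p q r where m: "m = (p,q,r)" by (cases m) auto
  have "p + q + r = a + b + c" using sort3_props[of a b c p q r] assms(1) m by simp
  moreover have "p + q + r = j" using assms(2) m by (auto simp: Sorted_def Strict_def)
  ultimately show ?thesis using assms(3) by auto
qed

lemma sv_in: assumes m: "m \<in> Sorted j" and j: "j < d" shows "sv m \<in> Wsym 1 d j"
proof (rule WsymI)
  show "sv m \<in> Agr d j"
  proof (rule AgrI)
    fix a b c assume "\<not> (a < d \<and> b < d \<and> c < d \<and> a + b + c = j)"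
    then show "sv m (a,b,c) = 0" using sort3_sum_agr[of a b c m j d] m j by (auto simp: sv_def)
  qed
  fix a b c
  show "sv m (b,a,c) = 1 * sv m (a,b,c)" by (simp add: sv_def sort3_swap1)
  show "sv m (a,c,b) = 1 * sv m (a,b,c)" by (simp add: sv_def sort3_swap2)
qed

lemma sg_swap1: "a \<noteq> b \<Longrightarrow> b \<noteq> c \<Longrightarrow> a \<noteq> c \<Longrightarrow> sg (-1) (b,a,c) = - sg (-1::'a::field) (a,b,c)"
  by (auto simp: sg_def)
lemma sg_swap2: "a \<noteq> b \<Longrightarrow> b \<noteq> c \<Longrightarrow> a \<noteq> c \<Longrightarrow> sg (-1) (a,c,b) = - sg (-1::'a::field) (a,b,c)"
  by (auto simp: sg_def)
lemma sg_sq: "sg (-1) m * sg (-1::'a::field) m = 1"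
  by (cases m) (auto simp: sg_def)

lemma av_in: assumes m: "m \<in> Strict j" and j: "j < d" shows "av m \<in> Wsym (-1) d j"
proof (rule WsymI)
  show "av m \<in> Agr d j"
  proof (rule AgrI)
    fix a b c assume "\<not> (a < d \<and> b < d \<and> c < d \<and> a + b + c = j)"
    then show "av m (a,b,c) = 0" using sort3_sum_agr[of a b c m j d] m j by (auto simp: av_def)
  qed
  fix a b c
  have dst: "a \<noteq> b \<and> b \<noteq> c \<and> a \<noteq> c" if "sort3 (a,b,c) = m"
  proof -
    obtain p q r where mm: "m = (p,q,r)" by (cases m) auto
    show ?thesis using sort3_strict[of a b c p q r] that m mm by (auto simp: Strict_def)
  qed
  show "av m (b,a,c) = -1 * av m (a,b,c)"
    using dst sg_swap1[of a b c] by (cases "sort3 (a,b,c) = m") (simp_all add: av_def sort3_swap1)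
  show "av m (a,c,b) = -1 * av m (a,b,c)"
    using dst sg_swap2[of a b c] by (cases "sort3 (a,b,c) = m") (simp_all add: av_def sort3_swap2)
qed

lemma sv_pt: "m \<in> Sorted j \<Longrightarrow> m' \<in> Sorted j \<Longrightarrow> sv m m' = (if m = m' then 1 else 0)"
  by (auto simp: sv_def Sorted_def sort3_id)

lemma av_pt: "m \<in> Strict j \<Longrightarrow> m' \<in> Strict j \<Longrightarrow> av m m' = (if m = m' then 1 else 0)"
  by (auto simp: av_def Strict_def sort3_id sg_def)

lemma sum_delta_sort:
  fixes g :: "expo \<Rightarrow> 'a::field"
  assumes "finite S"
  shows "(\<Sum>m\<in>S. g m * (if sort3 x = m then c else 0)) = (if sort3 x \<in> S then g (sort3 x) * c else 0)"
proof -
  have "(\<Sum>m\<in>S. g m * (if sort3 x = m then c else 0)) = (\<Sum>m\<in>S. if sort3 x = m then g m * c else 0)"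
    by (rule sum.cong) auto
  also have "\<dots> = (if sort3 x \<in> S then g (sort3 x) * c else 0)"
    using sum.delta[OF assms, of "sort3 x" "\<lambda>m. g m * c"] by (simp add: eq_commute)
  finally show ?thesis .
qed

lemma sym_span:
  fixes f :: "('a::field) vec"
  assumes f: "f \<in> Wsym 1 d j"
  shows "f = (\<Sum>m\<in>Sorted j. cscale (f m) (sv m))"
proof (rule ext)
  fix x :: expo
  obtain a b c where x: "x = (a,b,c)" by (cases x) auto
  have "(\<Sum>m\<in>Sorted j. cscale (f m) (sv m)) x = (\<Sum>m\<in>Sorted j. f m * (if sort3 x = m then 1 else 0))"
    by (simp add: sum_fun_apply cscale_def sv_def)
  also have "\<dots> = (if sort3 x \<in> Sorted j then f (sort3 x) * 1 else 0)"
    by (rule sum_delta_sort[OF Sorted_fin])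
  also have "\<dots> = f x"
  proof (cases "sort3 x \<in> Sorted j")
    case True
    then show ?thesis using Wsym_sort[OF f, of a b c] x by (simp add: sg_def)
  next
    case False
    obtain p q r where s: "sort3 (a,b,c) = (p,q,r)" by (cases "sort3 (a,b,c)") auto
    then have "a + b + c \<noteq> j" using False sort3_props[OF s] x by (auto simp: Sorted_def)
    then show ?thesis using False Agr_zero'[OF Wsym_Agr[OF f]] x by simp
  qed
  finally show "f x = (\<Sum>m\<in>Sorted j. cscale (f m) (sv m)) x" by simp
qed

lemma alt_tie:
  fixes f :: "('a::field_char_0) vec"
  assumes f: "f \<in> Wsym (-1) d j"
  shows "f (p,p,r) = 0" "f (p,q,q) = 0"
proof -
  have h1: "f (p,p,r) = -1 * f (p,p,r)" by (rule Wsym_D1[OF f])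
  have "2 * f (p,p,r) = 0" using h1 by algebra
  then show "f (p,p,r) = 0" by simp
  have h2: "f (p,q,q) = -1 * f (p,q,q)" by (rule Wsym_D2[OF f])
  have "2 * f (p,q,q) = 0" using h2 by algebra
  then show "f (p,q,q) = 0" by simp
qed

lemma alt_span:
  fixes f :: "('a::field_char_0) vec"
  assumes f: "f \<in> Wsym (-1) d j"
  shows "f = (\<Sum>m\<in>Strict j. cscale (f m) (av m))"
proof (rule ext)
  fix x :: expo
  obtain a b c where x: "x = (a,b,c)" by (cases x) auto
  have ws: "f (sort3 x) = sg (-1) x * f x" using Wsym_sort[OF f, of a b c] x by simp
  have "(\<Sum>m\<in>Strict j. cscale (f m) (av m)) x = (\<Sum>m\<in>Strict j. f m * (if sort3 x = m then sg (-1) x else 0))"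
    by (simp add: sum_fun_apply cscale_def av_def)
  also have "\<dots> = (if sort3 x \<in> Strict j then f (sort3 x) * sg (-1) x else 0)"
    by (rule sum_delta_sort[OF Strict_fin])
  also have "\<dots> = f x"
  proof (cases "sort3 x \<in> Strict j")
    case True
    have "f (sort3 x) * sg (-1) x = sg (-1) x * f x * sg (-1) x" by (simp only: ws)
    also have "\<dots> = (sg (-1) x * sg (-1) x) * f x" by (simp only: ac_simps)
    also have "\<dots> = f x" by (simp only: sg_sq mult_1_left)
    finally show ?thesis using True by simp
  next
    case False
    obtain p q r where s: "sort3 (a,b,c) = (p,q,r)" by (cases "sort3 (a,b,c)") auto
    have pq: "p \<le> q" "q \<le> r" "p + q + r = a + b + c" using sort3_props[OF s] by auto
    have "f x = 0"
    proof (cases "a + b + c = j")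
      case False then show ?thesis using Agr_zero'[OF Wsym_Agr[OF f]] x by simp
    next
      case True
      then have "p = q \<or> q = r" using pq \<open>sort3 x \<notin> Strict j\<close> s x by (auto simp: Strict_def)
      then have "f (sort3 x) = 0" using s x alt_tie[OF f] by auto
      then have "sg (-1) x * f x = 0" using ws by simp
      moreover have "sg (-1) x \<noteq> (0::'a)" using sg_sq[of x] by (metis mult_zero_left zero_neq_one)
      ultimately show ?thesis by simp
    qed
    then show ?thesis using False by simp
  qed
  finally show "f x = (\<Sum>m\<in>Strict j. cscale (f m) (av m)) x" by simp
qed

lemma dim_sym:
  assumes j: "j < d"
  shows "VS.dim (Wsym 1 d j :: ('a::field) vec set) = card (Sorted j)"
proof -
  let ?B = "(sv :: expo \<Rightarrow> 'a vec) ` Sorted j"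
  have ind: "VS.independent ?B" and inj: "inj_on (sv :: expo \<Rightarrow> 'a vec) (Sorted j)"
    using indep_points[where S="Sorted j" and g=sv, OF Sorted_fin sv_pt[where j=j]] by blast+
  have sub: "?B \<subseteq> Wsym 1 d j" using sv_in j by auto
  have spn: "Wsym 1 d j \<subseteq> VS.span ?B"
  proof
    fix f :: "'a vec" assume f: "f \<in> Wsym 1 d j"
    have "(\<Sum>m\<in>Sorted j. cscale (f m) (sv m)) \<in> VS.span ?B"
      by (intro VS.span_sum VS.span_scale VS.span_base) auto
    then show "f \<in> VS.span ?B" using sym_span[OF f] by simp
  qed
  have "card ?B = VS.dim (Wsym 1 d j :: 'a vec set)" using VS.basis_card_eq_dim[OF sub spn ind] by simp
  then show ?thesis using card_image[OF inj] by simp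
qed

lemma dim_alt:
  assumes j: "j < d"
  shows "VS.dim (Wsym (-1) d j :: ('a::field_char_0) vec set) = card (Strict j)"
proof -
  let ?B = "(av :: expo \<Rightarrow> 'a vec) ` Strict j"
  have ind: "VS.independent ?B" and inj: "inj_on (av :: expo \<Rightarrow> 'a vec) (Strict j)"
    using indep_points[where S="Strict j" and g=av, OF Strict_fin av_pt[where j=j]] by blast+
  have sub: "?B \<subseteq> Wsym (-1) d j" using av_in j by auto
  have spn: "Wsym (-1) d j \<subseteq> VS.span ?B"
  proof
    fix f :: "'a vec" assume f: "f \<in> Wsym (-1) d j"
    have "(\<Sum>m\<in>Strict j. cscale (f m) (av m)) \<in> VS.span ?B"
      by (intro VS.span_sum VS.span_scale VS.span_base) auto
    then show "f \<in> VS.span ?B" using alt_span[OF f] by simp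
  qed
  have "card ?B = VS.dim (Wsym (-1) d j :: 'a vec set)" using VS.basis_card_eq_dim[OF sub spn ind] by simp
  then show ?thesis using card_image[OF inj] by simp
qed



lemma Sorted_split:
  assumes j: "0 < j"
  shows "Sorted j = (\<lambda>(a,b,c). (a,b,c+1)) ` Sorted (j-1) \<union> (\<lambda>b. (j - 2*b, b, b)) ` {b. j \<le> 3*b \<and> 2*b \<le> j}"
proof (rule set_eqI, rule iffI)
  fix x assume x: "x \<in> Sorted j"
  obtain a b c where xe: "x = (a,b,c)" by (cases x) auto
  have h: "a \<le> b" "b \<le> c" "a + b + c = j" using x xe by (auto simp: Sorted_def)
  show "x \<in> (\<lambda>(a,b,c). (a,b,c+1)) ` Sorted (j-1) \<union> (\<lambda>b. (j - 2*b, b, b)) ` {b. j \<le> 3*b \<and> 2*b \<le> j}"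
  proof (cases "b = c")
    case True
    then have "x = (\<lambda>b. (j - 2*b, b, b)) b" "b \<in> {b. j \<le> 3*b \<and> 2*b \<le> j}" using h xe by auto
    then show ?thesis by blast
  next
    case False
    then have "(a,b,c-1) \<in> Sorted (j-1)" "x = (\<lambda>(a,b,c). (a,b,c+1)) (a,b,c-1)" using h xe j by (auto simp: Sorted_def)
    then show ?thesis by blast
  qed
next
  fix x assume "x \<in> (\<lambda>(a,b,c). (a,b,c+1)) ` Sorted (j-1) \<union> (\<lambda>b. (j - 2*b, b, b)) ` {b. j \<le> 3*b \<and> 2*b \<le> j}"
  then show "x \<in> Sorted j" using j by (auto simp: Sorted_def)
qed

lemma Strict_split:
  assumes j: "0 < j"
  shows "Strict j = (\<lambda>(a,b,c). (a,b,c+1)) ` Strict (j-1) \<union> (\<lambda>b. (j - 1 - 2*b, b, b+1)) ` {b. j \<le> 3*b \<and> 2*b < j}"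
proof (rule set_eqI, rule iffI)
  fix x assume x: "x \<in> Strict j"
  obtain a b c where xe: "x = (a,b,c)" by (cases x) auto
  have h: "a < b" "b < c" "a + b + c = j" using x xe by (auto simp: Strict_def)
  show "x \<in> (\<lambda>(a,b,c). (a,b,c+1)) ` Strict (j-1) \<union> (\<lambda>b. (j - 1 - 2*b, b, b+1)) ` {b. j \<le> 3*b \<and> 2*b < j}"
  proof (cases "c = b + 1")
    case True
    then have "x = (\<lambda>b. (j - 1 - 2*b, b, b+1)) b" "b \<in> {b. j \<le> 3*b \<and> 2*b < j}" using h xe by auto
    then show ?thesis by blast
  next
    case False
    then have "(a,b,c-1) \<in> Strict (j-1)" "x = (\<lambda>(a,b,c). (a,b,c+1)) (a,b,c-1)" using h xe j by (auto simp: Strict_def)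
    then show ?thesis by blast
  qed
next
  fix x assume "x \<in> (\<lambda>(a,b,c). (a,b,c+1)) ` Strict (j-1) \<union> (\<lambda>b. (j - 1 - 2*b, b, b+1)) ` {b. j \<le> 3*b \<and> 2*b < j}"
  then show "x \<in> Strict j" using j by (auto simp: Strict_def)
qed

lemma range1: "{b::nat. j \<le> 3*b \<and> 2*b \<le> j} = {(j+2) div 3 ..< j div 2 + 1}"
  by auto

lemma range2: "{b::nat. j \<le> 3*b \<and> 2*b < j} = {(j+2) div 3 ..< (j+1) div 2}"
  by auto

lemma inj_shift: "inj_on (\<lambda>(a,b,c). (a::nat,b::nat,c+1::nat)) S"
  by (auto simp: inj_on_def)

lemma card_Sorted_step:
  assumes j: "0 < j"
  shows "card (Sorted j) = card (Sorted (j-1)) + (j div 2 + 1 - (j+2) div 3)"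
proof -
  let ?A = "(\<lambda>(a,b,c). (a,b,c+1)) ` Sorted (j-1)"
  let ?B = "(\<lambda>b. (j - 2*b, b, b)) ` {b. j \<le> 3*b \<and> 2*b \<le> j}"
  have fA: "finite ?A" using Sorted_fin by auto
  have fB: "finite ?B" unfolding range1 by auto
  have dis: "?A \<inter> ?B = {}" by (auto simp: Sorted_def)
  have cA: "card ?A = card (Sorted (j-1))" using card_image[OF inj_shift] .
  have cB: "card ?B = j div 2 + 1 - (j+2) div 3"
    unfolding range1 by (subst card_image) (auto simp: inj_on_def)
  have le: "(j+2) div 3 \<le> j div 2 + 1" by presburger
  show ?thesis using Sorted_split[OF j] card_Un_disjoint[OF fA fB dis] cA cB le by simp
qed

lemma card_Strict_step:
  assumes j: "0 < j"
  shows "card (Strict j) = card (Strict (j-1)) + ((j+1) div 2 - (j+2) div 3)"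
proof -
  let ?A = "(\<lambda>(a,b,c). (a,b,c+1)) ` Strict (j-1)"
  let ?B = "(\<lambda>b. (j - 1 - 2*b, b, b+1)) ` {b. j \<le> 3*b \<and> 2*b < j}"
  have fA: "finite ?A" using Strict_fin by auto
  have fB: "finite ?B" unfolding range2 by auto
  have dis: "?A \<inter> ?B = {}" by (auto simp: Strict_def)
  have cA: "card ?A = card (Strict (j-1))" using card_image[OF inj_shift] .
  have cB: "card ?B = (j+1) div 2 - (j+2) div 3"
    unfolding range2 by (subst card_image) (auto simp: inj_on_def)
  have le: "(j+2) div 3 \<le> (j+1) div 2" by presburger
  show ?thesis using Strict_split[OF j] card_Un_disjoint[OF fA fB dis] cA cB le by simp
qed

lemma Sorted0: "card (Sorted 0) = 1"
proof -
  have "Sorted 0 = {(0,0,0)}" by (auto simp: Sorted_def)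
  then show ?thesis by simp
qed

lemma Strict0: "card (Strict 0) = 0"
proof -
  have "Strict 0 = {}" by (auto simp: Strict_def)
  then show ?thesis by simp
qed



lemma sym_spans: "j < d \<Longrightarrow> (Wsym 1 d j :: ('a::field) vec set) \<subseteq> VS.span (sv ` Sorted j)"
proof
  fix f :: "'a vec" assume f: "f \<in> Wsym 1 d j"
  have "(\<Sum>m\<in>Sorted j. cscale (f m) (sv m)) \<in> VS.span (sv ` Sorted j)"
    by (intro VS.span_sum VS.span_scale VS.span_base) auto
  then show "f \<in> VS.span (sv ` Sorted j)" using sym_span[OF f] by simp
qed

lemma alt_spans: "j < d \<Longrightarrow> (Wsym (-1) d j :: ('a::field_char_0) vec set) \<subseteq> VS.span (av ` Strict j)"
proof
  fix f :: "'a vec" assume f: "f \<in> Wsym (-1) d j"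
  have "(\<Sum>m\<in>Strict j. cscale (f m) (av m)) \<in> VS.span (av ` Strict j)"
    by (intro VS.span_sum VS.span_scale VS.span_base) auto
  then show "f \<in> VS.span (av ` Strict j)" using alt_span[OF f] by simp
qed

lemma ker_Wsym:
  fixes e :: "'a::field_char_0"
  assumes j: "0 < j" "j < d"
    and fin: "Wsym e d j \<subseteq> VS.span Bj" "finite Bj" "Wsym e d (j-1) \<subseteq> VS.span Bi" "finite Bi"
  shows "VS.dim {f \<in> Wsym e d j. Eop d f = 0} = VS.dim (Wsym e d j) - VS.dim (Wsym e d (j-1))"
proof (rule ker_dim[where W = "Wsym e d", OF j Wsym_subspace Wsym_subspace fin])
  show "Wsym e d (j - 1) \<subseteq> Agr d (j - 1)" using Wsym_Agr by blast
  show "Eop d ` Wsym e d j \<subseteq> Wsym e d (j - 1)" using Eop_Wsym j by blast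
  show "Lop ` Wsym e d (j - 1) \<subseteq> Wsym e d j"
  proof
    fix g assume "g \<in> Lop ` Wsym e d (j - 1)"
    then obtain f where f: "f \<in> Wsym e d (j-1)" "g = Lop f" by auto
    have "Lop f \<in> Wsym e d (j - 1 + 1)" using Lop_Wsym[OF f(1)] j by simp
    then show "g \<in> Wsym e d j" using f j by simp
  qed
qed

lemma triv_val:
  assumes j: "j < d"
  shows "VS.dim (triv_part d j :: ('a::field_char_0) vec set) = j div 2 + 1 - (j+2) div 3"
proof (cases "j = 0")
  case True
  have "{f \<in> Wsym 1 d j. Eop d f = 0} = (Wsym 1 d j :: 'a vec set)"
    using Eop_Agr0 Wsym_Agr True by blast
  then show ?thesis unfolding triv_part_eq using dim_sym[OF j] Sorted0 True by simp
next
  case False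
  then have j0: "0 < j" by simp
  have "VS.dim (triv_part d j :: 'a vec set) = VS.dim (Wsym 1 d j :: 'a vec set) - VS.dim (Wsym 1 d (j-1) :: 'a vec set)"
    unfolding triv_part_eq
    by (rule ker_Wsym[OF j0 j sym_spans[OF j] finite_imageI[OF Sorted_fin] sym_spans finite_imageI[OF Sorted_fin]])
      (use j in simp)
  moreover have "VS.dim (Wsym 1 d j :: 'a vec set) = card (Sorted j)" using dim_sym[OF j] .
  moreover have "VS.dim (Wsym 1 d (j-1) :: 'a vec set) = card (Sorted (j-1))" by (rule dim_sym) (use j in simp)
  moreover have "(j+2) div 3 \<le> j div 2 + 1" by presburger
  ultimately show ?thesis using card_Sorted_step[OF j0] by simp
qed

lemma sign_val:
  assumes j: "j < d"
  shows "VS.dim (sign_part d j :: ('a::field_char_0) vec set) = (j+1) div 2 - (j+2) div 3"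
proof (cases "j = 0")
  case True
  have "{f \<in> Wsym (-1) d j. Eop d f = 0} = (Wsym (-1) d j :: 'a vec set)"
    using Eop_Agr0 Wsym_Agr True by blast
  then show ?thesis unfolding sign_part_eq using dim_alt[OF j] Strict0 True by simp
next
  case False
  then have j0: "0 < j" by simp
  have "VS.dim (sign_part d j :: 'a vec set) = VS.dim (Wsym (-1) d j :: 'a vec set) - VS.dim (Wsym (-1) d (j-1) :: 'a vec set)"
    unfolding sign_part_eq
    by (rule ker_Wsym[OF j0 j alt_spans[OF j] finite_imageI[OF Strict_fin] alt_spans finite_imageI[OF Strict_fin]])
      (use j in simp)
  moreover have "VS.dim (Wsym (-1) d j :: 'a vec set) = card (Strict j)" using dim_alt[OF j] .
  moreover have "VS.dim (Wsym (-1) d (j-1) :: 'a vec set) = card (Strict (j-1))" by (rule dim_alt) (use j in simp)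
  moreover have "(j+2) div 3 \<le> (j+1) div 2" by presburger
  ultimately show ?thesis using card_Strict_step[OF j0] by simp
qed

lemma fin_real:
  fixes T :: nat and X Y :: int
  assumes "int T = X div 6 - Y div 2" "even Y" "x = real_of_int X" "y = real_of_int Y"
  shows "real T = real_of_int \<lfloor>x / 6\<rfloor> - y / 2"
proof -
  have f: "\<lfloor>x / 6\<rfloor> = X div 6" using floor_divide_of_int_eq[of X 6] assms(3) by simp
  obtain k where k: "Y = 2 * k" using assms(2) by auto
  have "y / 2 = real_of_int k" using assms(4) k by simp
  moreover have "Y div 2 = k" using k by simp
  ultimately show ?thesis using f assms(1)
    by (metis of_int_diff of_int_of_nat_eq)
qed



lemma mod6E:
  fixes j :: nat
  obtains q where "j = 6*q" | q where "j = 6*q+1" | q where "j = 6*q+2" | q where "j = 6*q+3"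
    | q where "j = 6*q+4" | q where "j = 6*q+5"
proof -
  have j: "j = 6*(j div 6) + j mod 6" by simp
  have "j mod 6 < 6" by simp
  then have "j mod 6 = 0 \<or> j mod 6 = 1 \<or> j mod 6 = 2 \<or> j mod 6 = 3 \<or> j mod 6 = 4 \<or> j mod 6 = 5" by linarith
  then show ?thesis
  proof (elim disjE)
    assume "j mod 6 = 0" then show ?thesis using that(1)[of "j div 6"] j by simp
  next
    assume "j mod 6 = 1" then show ?thesis using that(2)[of "j div 6"] j by simp
  next
    assume "j mod 6 = 2" then show ?thesis using that(3)[of "j div 6"] j by simp
  next
    assume "j mod 6 = 3" then show ?thesis using that(4)[of "j div 6"] j by simp
  next
    assume "j mod 6 = 4" then show ?thesis using that(5)[of "j div 6"] j by simp
  next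
    assume "j mod 6 = 5" then show ?thesis using that(6)[of "j div 6"] j by simp
  qed
qed

lemma jT_odd: "odd (j::nat) \<Longrightarrow> j div 2 + 1 - (j+2) div 3 = (j+3) div 6"
  by (cases j rule: mod6E) simp_all
lemma jT_even: "even (j::nat) \<Longrightarrow> j div 2 + 1 - (j+2) div 3 = j div 6 + 1"
  by (cases j rule: mod6E) simp_all
lemma jS_odd: "odd (j::nat) \<Longrightarrow> (j+1) div 2 - (j+2) div 3 = (j+3) div 6"
  by (cases j rule: mod6E) simp_all
lemma jS_even: "even (j::nat) \<Longrightarrow> (j+1) div 2 - (j+2) div 3 = j div 6"
  by (cases j rule: mod6E) simp_all

lemma final_int:
  fixes N :: nat and A X Y c e :: int
  assumes "int N = A div 6 + e" "X = A + c*6" "Y = (c - e) * 2"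
  shows "int N = X div 6 - Y div 2" "even Y"
proof -
  have "X div 6 = c + A div 6" using assms(2) by simp
  moreover have "Y div 2 = c - e" using assms(3) by simp
  ultimately show "int N = X div 6 - Y div 2" using assms(1) by simp
  show "even Y" using assms(3) by simp
qed

theorem theorem5p3:
  fixes d j :: nat
  assumes alg_closed: "\<And>p :: 'a::field_char_0 poly. degree p > 0 \<Longrightarrow> \<exists>x. poly p x = 0"
    and d3: "d \<ge> 3" and jd: "j \<le> d - 1"
  shows
   "(odd d \<and> even (d - j) \<longrightarrow>
       real (triv TYPE('a) d j) = \<lfloor>(3 * real d - 2 * real j - 3) / 6\<rfloor> - (real d - real j - 2) / 2 \<and>
       real (sgn_mult TYPE('a) d j) = \<lfloor>(3 * real d - 2 * real j - 3) / 6\<rfloor> - (real d - real j - 2) / 2)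
  \<and> (odd d \<and> odd (d - j) \<longrightarrow>
       real (triv TYPE('a) d j) = \<lfloor>(3 * real d - 2 * real j - 3) / 6\<rfloor> - (real d - real j - 3) / 2 \<and>
       real (sgn_mult TYPE('a) d j) = \<lfloor>(3 * real d - 2 * real j - 3) / 6\<rfloor> - (real d - real j - 1) / 2)
  \<and> (even d \<and> even (d - j) \<longrightarrow>
       real (triv TYPE('a) d j) = \<lfloor>(3 * real d - 2 * real j) / 6\<rfloor> - (real d - real j - 2) / 2 \<and>
       real (sgn_mult TYPE('a) d j) = \<lfloor>(3 * real d - 2 * real j) / 6\<rfloor> - (real d - real j) / 2)
  \<and> (even d \<and> odd (d - j) \<longrightarrow>
       real (triv TYPE('a) d j) = \<lfloor>(3 * real d - 2 * real j) / 6\<rfloor> - (real d - real j - 1) / 2 \<and>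
       real (sgn_mult TYPE('a) d j) = \<lfloor>(3 * real d - 2 * real j) / 6\<rfloor> - (real d - real j - 1) / 2)"
proof -
  have jd': "j < d" using jd d3 by simp
  have T: "triv TYPE('a) d j = j div 2 + 1 - (j+2) div 3"
    unfolding triv_def vdim_def using triv_val[OF jd', where 'a='a] by simp
  have S: "sgn_mult TYPE('a) d j = (j+1) div 2 - (j+2) div 3"
    unfolding sgn_mult_def vdim_def using sign_val[OF jd', where 'a='a] by simp
  have x1: "3 * real d - 2 * real j - 3 = real_of_int (3 * int d - 2 * int j - 3)" by simp
  have x2: "3 * real d - 2 * real j = real_of_int (3 * int d - 2 * int j)" by simp
  have y0: "real d - real j = real_of_int (int d - int j)" by simp
  have y1: "real d - real j - 1 = real_of_int (int d - int j - 1)" by simp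
  have y2: "real d - real j - 2 = real_of_int (int d - int j - 2)" by simp
  have y3: "real d - real j - 3 = real_of_int (int d - int j - 3)" by simp
  show ?thesis
  proof (intro conjI impI)
    assume h: "odd d \<and> even (d - j)"
    define t where "t = (d - j) div 2"
    have ev: "even (d - j)" using h by blast
    have t: "d - j = 2 * t" unfolding t_def using dvd_mult_div_cancel[OF ev] by (rule sym)
    have dd: "d = j + 2 * t" using t jd' by simp
    have D: "int d = int j + 2 * int t" using dd by simp
    have oj: "odd j" using h dd by simp
    have NT: "int (triv TYPE('a) d j) = (int j + 3) div 6 + 0"
      unfolding T jT_odd[OF oj] by (simp add: zdiv_int)
    have F: "int (triv TYPE('a) d j) = (3 * int d - 2 * int j - 3) div 6 - (int d - int j - 2) div 2" "even (int d - int j - 2)"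
      using final_int[where N="triv TYPE('a) d j" and A="(int j + 3)" and e="0" and c="int t - 1" and X="3 * int d - 2 * int j - 3" and Y="int d - int j - 2"] NT D
      by (simp_all add: algebra_simps)
    show "real (triv TYPE('a) d j) = \<lfloor>(3 * real d - 2 * real j - 3) / 6\<rfloor> - (real d - real j - 2) / 2"
      by (rule fin_real[OF F x1 y2])
    have NT: "int (sgn_mult TYPE('a) d j) = (int j + 3) div 6 + 0"
      unfolding S jS_odd[OF oj] by (simp add: zdiv_int)
    have F: "int (sgn_mult TYPE('a) d j) = (3 * int d - 2 * int j - 3) div 6 - (int d - int j - 2) div 2" "even (int d - int j - 2)"
      using final_int[where N="sgn_mult TYPE('a) d j" and A="(int j + 3)" and e="0" and c="int t - 1" and X="3 * int d - 2 * int j - 3" and Y="int d - int j - 2"] NT D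
      by (simp_all add: algebra_simps)
    show "real (sgn_mult TYPE('a) d j) = \<lfloor>(3 * real d - 2 * real j - 3) / 6\<rfloor> - (real d - real j - 2) / 2"
      by (rule fin_real[OF F x1 y2])
  next
    assume h: "odd d \<and> odd (d - j)"
    define t where "t = (d - j) div 2"
    have ev: "odd (d - j)" using h by blast
    have t: "d - j = 2 * t + 1" unfolding t_def using odd_two_times_div_two_succ[OF ev] by (rule sym)
    have dd: "d = j + 2 * t + 1" using t jd' by simp
    have D: "int d = int j + 2 * int t + 1" using dd by simp
    have oj: "even j" using h dd by simp
    have NT: "int (triv TYPE('a) d j) = int j div 6 + 1"
      unfolding T jT_even[OF oj] by (simp add: zdiv_int)
    have F: "int (triv TYPE('a) d j) = (3 * int d - 2 * int j - 3) div 6 - (int d - int j - 3) div 2" "even (int d - int j - 3)"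
      using final_int[where N="triv TYPE('a) d j" and A="int j" and e="1" and c="int t" and X="3 * int d - 2 * int j - 3" and Y="int d - int j - 3"] NT D
      by (simp_all add: algebra_simps)
    show "real (triv TYPE('a) d j) = \<lfloor>(3 * real d - 2 * real j - 3) / 6\<rfloor> - (real d - real j - 3) / 2"
      by (rule fin_real[OF F x1 y3])
    have NT: "int (sgn_mult TYPE('a) d j) = int j div 6 + 0"
      unfolding S jS_even[OF oj] by (simp add: zdiv_int)
    have F: "int (sgn_mult TYPE('a) d j) = (3 * int d - 2 * int j - 3) div 6 - (int d - int j - 1) div 2" "even (int d - int j - 1)"
      using final_int[where N="sgn_mult TYPE('a) d j" and A="int j" and e="0" and c="int t" and X="3 * int d - 2 * int j - 3" and Y="int d - int j - 1"] NT D
      by (simp_all add: algebra_simps)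
    show "real (sgn_mult TYPE('a) d j) = \<lfloor>(3 * real d - 2 * real j - 3) / 6\<rfloor> - (real d - real j - 1) / 2"
      by (rule fin_real[OF F x1 y1])
  next
    assume h: "even d \<and> even (d - j)"
    define t where "t = (d - j) div 2"
    have ev: "even (d - j)" using h by blast
    have t: "d - j = 2 * t" unfolding t_def using dvd_mult_div_cancel[OF ev] by (rule sym)
    have dd: "d = j + 2 * t" using t jd' by simp
    have D: "int d = int j + 2 * int t" using dd by simp
    have oj: "even j" using h dd by simp
    have NT: "int (triv TYPE('a) d j) = int j div 6 + 1"
      unfolding T jT_even[OF oj] by (simp add: zdiv_int)
    have F: "int (triv TYPE('a) d j) = (3 * int d - 2 * int j) div 6 - (int d - int j - 2) div 2" "even (int d - int j - 2)"
      using final_int[where N="triv TYPE('a) d j" and A="int j" and e="1" and c="int t" and X="3 * int d - 2 * int j" and Y="int d - int j - 2"] NT D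
      by (simp_all add: algebra_simps)
    show "real (triv TYPE('a) d j) = \<lfloor>(3 * real d - 2 * real j) / 6\<rfloor> - (real d - real j - 2) / 2"
      by (rule fin_real[OF F x2 y2])
    have NT: "int (sgn_mult TYPE('a) d j) = int j div 6 + 0"
      unfolding S jS_even[OF oj] by (simp add: zdiv_int)
    have F: "int (sgn_mult TYPE('a) d j) = (3 * int d - 2 * int j) div 6 - (int d - int j) div 2" "even (int d - int j)"
      using final_int[where N="sgn_mult TYPE('a) d j" and A="int j" and e="0" and c="int t" and X="3 * int d - 2 * int j" and Y="int d - int j"] NT D
      by (simp_all add: algebra_simps)
    show "real (sgn_mult TYPE('a) d j) = \<lfloor>(3 * real d - 2 * real j) / 6\<rfloor> - (real d - real j) / 2"
      by (rule fin_real[OF F x2 y0])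
  next
    assume h: "even d \<and> odd (d - j)"
    define t where "t = (d - j) div 2"
    have ev: "odd (d - j)" using h by blast
    have t: "d - j = 2 * t + 1" unfolding t_def using odd_two_times_div_two_succ[OF ev] by (rule sym)
    have dd: "d = j + 2 * t + 1" using t jd' by simp
    have D: "int d = int j + 2 * int t + 1" using dd by simp
    have oj: "odd j" using h dd by simp
    have NT: "int (triv TYPE('a) d j) = (int j + 3) div 6 + 0"
      unfolding T jT_odd[OF oj] by (simp add: zdiv_int)
    have F: "int (triv TYPE('a) d j) = (3 * int d - 2 * int j) div 6 - (int d - int j - 1) div 2" "even (int d - int j - 1)"
      using final_int[where N="triv TYPE('a) d j" and A="(int j + 3)" and e="0" and c="int t" and X="3 * int d - 2 * int j" and Y="int d - int j - 1"] NT D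
      by (simp_all add: algebra_simps)
    show "real (triv TYPE('a) d j) = \<lfloor>(3 * real d - 2 * real j) / 6\<rfloor> - (real d - real j - 1) / 2"
      by (rule fin_real[OF F x2 y1])
    have NT: "int (sgn_mult TYPE('a) d j) = (int j + 3) div 6 + 0"
      unfolding S jS_odd[OF oj] by (simp add: zdiv_int)
    have F: "int (sgn_mult TYPE('a) d j) = (3 * int d - 2 * int j) div 6 - (int d - int j - 1) div 2" "even (int d - int j - 1)"
      using final_int[where N="sgn_mult TYPE('a) d j" and A="(int j + 3)" and e="0" and c="int t" and X="3 * int d - 2 * int j" and Y="int d - int j - 1"] NT D
      by (simp_all add: algebra_simps)
    show "real (sgn_mult TYPE('a) d j) = \<lfloor>(3 * real d - 2 * real j) / 6\<rfloor> - (real d - real j - 1) / 2"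
      by (rule fin_real[OF F x2 y1])
  qed
qed

end
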